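(* Suppose $c\ge a\ge d_1>0$ and $c\ge b>d_2>0$ are real numbers. Then the equation $$d_1^{-\beta}+d_2^{-\beta}-a^{-\beta}-b^{-\beta}-c^{-\beta}+1=0$$ has at most one solution $\beta>0$. *)

theory Defs
  imports Complex_Main
begin

end

theory Submission
  imports Defs
begin

lemma mono_l:
  fixes l s t :: real
  assumes "s < t"
  shows "l * exp (s * l) \<le> l * exp (t * l)"
proof (cases "l \<ge> 0")
  case True
  then have "exp (s * l) \<le> exp (t * l)" using assms by (simp add: mult_right_mono)
  then show ?thesis using True by (simp add: mult_left_mono)
next
  case False
  then have "exp (t * l) \<le> exp (s * l)" using assms
    by (simp add: mult_right_mono_neg less_imp_le)
  then show ?thesis using False by (simp add: mult_left_mono_neg)
qed

lemma diff_mono: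
  fixes p q s t :: real
  assumes "q \<le> p" "0 \<le> q" "0 \<le> s" "s < t"
  shows "0 \<le> exp (t*q) - exp (s*q) \<and> exp (t*q) - exp (s*q) \<le> exp (t*p) - exp (s*p)"
proof -
  have e1: "exp (t*q) - exp (s*q) = exp (s*q) * (exp ((t-s)*q) - 1)"
    by (simp add: algebra_simps flip: exp_add)
  have e2: "exp (t*p) - exp (s*p) = exp (s*p) * (exp ((t-s)*p) - 1)"
    by (simp add: algebra_simps flip: exp_add)
  have a1: "exp (s*q) \<le> exp (s*p)" using assms by (simp add: mult_left_mono)
  have a2: "0 \<le> exp ((t-s)*q) - 1" using assms by simp
  have a3: "exp ((t-s)*q) - 1 \<le> exp ((t-s)*p) - 1" using assms by (simp add: mult_left_mono)
  show ?thesis unfolding e1 e2 using a1 a2 a3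
    by (simp add: mult_mono)
qed

lemma term_mono:
  fixes p q s t :: real
  assumes "q \<le> p" "0 \<le> q" "0 \<le> s" "s < t"
  shows "q * exp (t*q) - q * exp (s*q) \<le> p * exp (t*p) - p * exp (s*p)"
proof -
  from diff_mono[OF assms] have h: "0 \<le> exp (t*q) - exp (s*q)"
      "exp (t*q) - exp (s*q) \<le> exp (t*p) - exp (s*p)" by auto
  have "q * (exp (t*q) - exp (s*q)) \<le> p * (exp (t*p) - exp (s*p))"
    using h assms by (simp add: mult_mono)
  then show ?thesis by (simp add: algebra_simps)
qed

lemma term_strict:
  fixes p q s t :: real
  assumes "q < p" "0 \<le> q" "0 \<le> s" "s < t"
  shows "q * exp (t*q) - q * exp (s*q) < p * exp (t*p) - p * exp (s*p)"
proof -
  from diff_mono[of q p s t] assms have h: "0 \<le> exp (t*q) - exp (s*q)"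
      "exp (t*q) - exp (s*q) \<le> exp (t*p) - exp (s*p)" by auto
  have pos: "0 < exp (t*p) - exp (s*p)" using assms by (simp add: mult_strict_right_mono)
  have "q * (exp (t*q) - exp (s*q)) \<le> q * (exp (t*p) - exp (s*p))"
    using h assms by (simp add: mult_left_mono)
  also have "\<dots> < p * (exp (t*p) - exp (s*p))"
    using pos assms by (simp add: mult_strict_right_mono)
  finally show ?thesis by (simp add: algebra_simps)
qed

theorem lemma1:
  fixes a b c d1 d2 :: real
  assumes "c \<ge> a" and "a \<ge> d1" and "d1 > 0"
    and "c \<ge> b" and "b > d2" and "d2 > 0"
  shows "\<forall>\<beta>1 \<beta>2. \<beta>1 > 0 \<and> \<beta>2 > 0
      \<and> d1 powr (-\<beta>1) + d2 powr (-\<beta>1) - a powr (-\<beta>1) - b powr (-\<beta>1) - c powr (-\<beta>1) + 1 = 0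
      \<and> d1 powr (-\<beta>2) + d2 powr (-\<beta>2) - a powr (-\<beta>2) - b powr (-\<beta>2) - c powr (-\<beta>2) + 1 = 0
      \<longrightarrow> \<beta>1 = \<beta>2"
proof -
  have pa: "a > 0" "b > 0" "c > 0" using assms by auto
  define lc where "lc = ln c"
  define pA where "pA = ln c - ln d1"
  define pC where "pC = ln c - ln a"
  define pB where "pB = ln c - ln d2"
  define pD where "pD = ln c - ln b"
  have hAC: "pC \<le> pA" "0 \<le> pC" using assms pa unfolding pA_def pC_def by auto
  have hBD: "pD < pB" "0 \<le> pD" using assms pa unfolding pB_def pD_def by auto
  define g where "g = (\<lambda>x. exp (x*lc) - 1 + exp (x*pA) - exp (x*pC) + exp (x*pB) - exp (x*pD))"
  define g' where "g' = (\<lambda>x. lc * exp (x*lc) + pA * exp (x*pA) - pC * exp (x*pC)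
      + pB * exp (x*pB) - pD * exp (x*pD))"
  have D: "DERIV g x :> g' x" for x
    unfolding g_def g'_def
    by (auto intro!: derivative_eq_intros simp: algebra_simps)
  have cont: "continuous_on S g" for S
    using D by (meson DERIV_isCont continuous_at_imp_continuous_on)
  have dif: "g differentiable (at x)" for x
    using D real_differentiable_def by blast
  have g0: "g 0 = 0" unfolding g_def by simp
  have strict: "g' s < g' t" if "0 \<le> s" "s < t" for s t
  proof -
    have "lc * exp (s*lc) \<le> lc * exp (t*lc)" using mono_l[OF \<open>s<t\<close>] .
    moreover have "pC * exp (t*pC) - pC * exp (s*pC) \<le> pA * exp (t*pA) - pA * exp (s*pA)"
      using term_mono[OF hAC that] .
    moreover have "pD * exp (t*pD) - pD * exp (s*pD) < pB * exp (t*pB) - pB * exp (s*pB)"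
      using term_strict[OF hBD that] .
    ultimately show ?thesis unfolding g'_def by linarith
  qed
  have fg: "d1 powr (-x) + d2 powr (-x) - a powr (-x) - b powr (-x) - c powr (-x) + 1
      = exp (- (x*lc)) * g x" for x
  proof -
    have "exp (- (x*lc)) * g x = exp (-(x*lc)) * exp (x*lc) - exp (-(x*lc)) + exp (-(x*lc)) * exp (x*pA)
       - exp (-(x*lc)) * exp (x*pC) + exp (-(x*lc)) * exp (x*pB) - exp (-(x*lc)) * exp (x*pD)"
      unfolding g_def by (simp add: algebra_simps)
    also have "\<dots> = 1 - c powr (-x) + d1 powr (-x) - a powr (-x) + d2 powr (-x) - b powr (-x)"
      using assms pa unfolding lc_def pA_def pB_def pC_def pD_def
      by (simp add: powr_def flip: exp_add add: algebra_simps)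
    finally show ?thesis by simp
  qed
  have zero: "g x = 0" if "d1 powr (-x) + d2 powr (-x) - a powr (-x) - b powr (-x) - c powr (-x) + 1 = 0" for x
    using that fg by simp
  have main: False if xy: "0 < x" "x < y" "g x = 0" "g y = 0" for x y
  proof -
    obtain z1 where z1: "0 < z1" "z1 < x" "DERIV g z1 :> 0"
      using Rolle[of 0 x g, OF _ _ cont dif] xy g0 by force
    obtain z2 where z2: "x < z2" "z2 < y" "DERIV g z2 :> 0"
      using Rolle[of x y g, OF _ _ cont dif] xy by force
    have "g' z1 = 0" "g' z2 = 0" using z1 z2 D DERIV_unique by blast+
    moreover have "g' z1 < g' z2" using strict[of z1 z2] z1 z2 by simp
    ultimately show False by simp
  qed
  show ?thesis
  proof (intro allI impI)
    fix x y :: real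
    assume h: "x > 0 \<and> y > 0
      \<and> d1 powr (-x) + d2 powr (-x) - a powr (-x) - b powr (-x) - c powr (-x) + 1 = 0
      \<and> d1 powr (-y) + d2 powr (-y) - a powr (-y) - b powr (-y) - c powr (-y) + 1 = 0"
    then have "g x = 0" "g y = 0" using zero by auto
    then show "x = y" using main[of x y] main[of y x] h by (metis linorder_neqE_linordered_idom)
  qed
qed

end
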